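(* Let $\mathcal{P}$ be a finite bias distribution and let $\ell'\ge2$, $0\le x'\le\ell'-1$ be integers. If the condition $E_p[f_{\ell,x}(p)]=0$ holds for any two of the three pairs $(\ell,x)=(\ell'-1,x')$, $(\ell',x')$, $(\ell',x'+1)$, then it also holds for the remaining pair.
   Context: A finite bias distribution is a probability distribution $\mathcal{P}$ supported on a finite subset of $(0,1)$ that is symmetric: it outputs $a$ and $1-a$ with the same probability. $E_p$ is expectation over $p\sim\mathcal{P}$. $\sigma(p)=\sqrt{(1-p)/p}$; for integers $\ell\ge1$, $0\le x\le\ell$, $f_{\ell,x}(p)=p^x(1-p)^{\ell-x}(x\sigma(p)-(\ell-x)\sigma(1-p))$. *)

theory Defs
  imports "HOL-Probability.Probability"
begin

definition finite_bias_dist :: "real pmf \<Rightarrow> bool" where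
  "finite_bias_dist P \<longleftrightarrow> finite (set_pmf P) \<and> set_pmf P \<subseteq> {0<..<1}
     \<and> (\<forall>a. pmf P a = pmf P (1 - a))"

definition sigma :: "real \<Rightarrow> real" where
  "sigma p = sqrt ((1 - p) / p)"

definition f :: "nat \<Rightarrow> nat \<Rightarrow> real \<Rightarrow> real" where
  "f l x p = p ^ x * (1 - p) ^ (l - x) *
     (real x * sigma p - (real l - real x) * sigma (1 - p))"

definition cond :: "real pmf \<Rightarrow> nat \<Rightarrow> nat \<Rightarrow> bool" where
  "cond P l x \<longleftrightarrow> measure_pmf.expectation P (f l x) = 0"

end

theory Submission
  imports Defs
begin

lemma psig: assumes "0 < p" "p < (1::real)" shows "p * sigma p = sqrt (p * (1 - p))"
proof -
  have "p * sigma p = sqrt (p^2) * sqrt ((1-p)/p)" using assms by (simp add: sigma_def)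
  also have "\<dots> = sqrt (p^2 * ((1-p)/p))" by (simp only: real_sqrt_mult)
  also have "p^2 * ((1-p)/p) = p * (1-p)" using assms by (simp add: power2_eq_square)
  finally show ?thesis .
qed

lemma key: assumes "0 < p" "p < (1::real)"
  shows "f (x+k) x p = f (x+k+1) x p + f (x+k+1) (x+1) p"
proof -
  have h: "p * sigma p = (1-p) * sigma (1-p)"
    using psig[OF assms] psig[of "1-p"] assms by (simp add: mult.commute)
  define s where "s = sigma p"
  define t where "t = sigma (1-p)"
  have h': "p * s = (1-p) * t" using h by (simp add: s_def t_def)
  have "f (x+k+1) x p + f (x+k+1) (x+1) p
     = p^x * (1-p)^k * ((1-p) * (real x * s - (real k + 1) * t) + p * ((real x + 1) * s - real k * t))"
    by (simp add: f_def s_def t_def algebra_simps)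
  also have "(1-p) * (real x * s - (real k + 1) * t) + p * ((real x + 1) * s - real k * t)
      = real x * s - real k * t" using h' by (simp add: algebra_simps)
  finally show ?thesis by (simp add: f_def s_def t_def algebra_simps)
qed

theorem lemma2:
  fixes P :: "real pmf" and l' x' :: nat
  assumes "finite_bias_dist P" and "l' \<ge> 2" and "x' \<le> l' - 1"
  shows "(cond P (l' - 1) x' \<and> cond P l' x' \<longrightarrow> cond P l' (x' + 1))
       \<and> (cond P (l' - 1) x' \<and> cond P l' (x' + 1) \<longrightarrow> cond P l' x')
       \<and> (cond P l' x' \<and> cond P l' (x' + 1) \<longrightarrow> cond P (l' - 1) x')"
proof -
  from assms(1) have fin: "finite (set_pmf P)" and sub: "set_pmf P \<subseteq> {0<..<1}"
    by (auto simp: finite_bias_dist_def)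
  obtain k where k: "l' = x' + k + 1" using assms(2,3)
    by (metis add.commute add_diff_inverse_nat diff_less le_less_trans less_one
        not_less_eq_eq one_le_numeral order_less_imp_le Suc_eq_plus1 le_add_diff_inverse2
        zero_less_numeral)
  have l1: "l' - 1 = x' + k" using k by simp
  have "measure_pmf.expectation P (f (l'-1) x')
      = measure_pmf.expectation P (\<lambda>p. f l' x' p + f l' (x'+1) p)"
    unfolding l1 k
    by (rule integral_cong_AE) (use sub key in \<open>auto intro!: AE_pmfI\<close>)
  also have "\<dots> = measure_pmf.expectation P (f l' x') + measure_pmf.expectation P (f l' (x'+1))"
    by (rule Bochner_Integration.integral_add) (auto intro: integrable_measure_pmf_finite fin)
  finally show ?thesis unfolding cond_def by linarith
qed

end
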